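(* For $n=4$ agents and $n=4$ houses, on the preference domain $\mathcal{R}^>$ defined in the context, random serial dictatorship is not the only assignment rule satisfying equal treatment of equals, ex post efficiency and strategyproofness: there exists an assignment rule on $\mathcal{R}^>$ satisfying these three axioms that returns a different random assignment from RSD at some profile in $\mathcal{R}^>$.
   Context: Let $N$ be a set of $n$ agents and $H$ a set of $n$ houses. A preference profile assigns to each agent $i$ a strict linear order $\succ_i$ over $H$. The domain $\mathcal{R}^>$ consists of the profiles in which all agents have the same ranking over all but one house, i.e. there exist a house $h^*$ and a linear order on $H\setminus\{h^*\}$ such that every agent's preference restricted to $H\setminus\{h^*\}$ coincides with that order. An assignment rule on $\mathcal{R}^>$ maps each profile $R\in\mathcal{R}^>$ to a bistochastic matrix $f(R)$; $f(R,i,h)$ is the probability that $i$ gets $h$. Serial dictatorship $SD_\pi$ for a priority order $\pi$ lets agents in order $\pi$ take their most preferred remaining house; $RSD(R)=\frac1{n!}\sum_\pi SD_\pi(R)$. A deterministic assignment $M$ is efficient at $R$ if no other deterministic assignment $M'\ne M$ satisfies, for all $i$ and $h\ne h'$, $M'_{i,h'}=M_{i,h}=1\Rightarrow h'\succ_i h$; ex post efficiency: each $f(R)$ is a convex combination of deterministic assignments efficient at $R$. Strategyproofness (on $\mathcal{R}^>$): for all $i$ and all $R,R'\in\mathcal{R}^>$ differing only in agent $i$'s preference, $\sum_{h'\succ_i h}f(R,i,h')\ge\sum_{h'\succ_i h}f(R',i,h')$ for every $h$, where $\succ_i$ is $i$'s preference in $R$. Equal treatment of equals: $\succ_i=\succ_j$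 implies $f(R,i,h)=f(R,j,h)$ for all $h$. *)

theory Defs
  imports Complex_Main "HOL-Combinatorics.Multiset_Permutations"
begin

text \<open>A preference is a list enumerating
  all houses, most preferred first.\<close>

definition is_pref :: "nat \<Rightarrow> nat list \<Rightarrow> bool" where
  "is_pref n p \<longleftrightarrow> distinct p \<and> set p = {0..<n}"

definition rank :: "nat list \<Rightarrow> nat \<Rightarrow> nat" where
  "rank p h = length (takeWhile (\<lambda>x. x \<noteq> h) p)"

definition prefers :: "nat list \<Rightarrow> nat \<Rightarrow> nat \<Rightarrow> bool" where
  "prefers p a b \<longleftrightarrow> rank p a < rank p b"

definition is_profile :: "nat \<Rightarrow> (nat \<Rightarrow> nat list) \<Rightarrow> bool" where
  "is_profile n R \<longleftrightarrow> (\<forall>i<n. is_pref n (R i)) \<and> (\<forall>j\<ge>n. R j = [])"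

definition domain_gt :: "nat \<Rightarrow> (nat \<Rightarrow> nat list) \<Rightarrow> bool" where
  "domain_gt n R \<longleftrightarrow> is_profile n R \<and>
     (\<exists>hs<n. \<exists>L. \<forall>i<n. filter (\<lambda>h. h \<noteq> hs) (R i) = L)"

definition bistochastic :: "nat \<Rightarrow> (nat \<Rightarrow> nat \<Rightarrow> real) \<Rightarrow> bool" where
  "bistochastic n M \<longleftrightarrow> (\<forall>i<n. \<forall>h<n. M i h \<ge> 0) \<and>
     (\<forall>i<n. (\<Sum>h<n. M i h) = 1) \<and> (\<forall>h<n. (\<Sum>i<n. M i h) = 1)"

definition deterministic :: "nat \<Rightarrow> (nat \<Rightarrow> nat \<Rightarrow> real) \<Rightarrow> bool" where
  "deterministic n M \<longleftrightarrow> bistochastic n M \<and> (\<forall>i<n. \<forall>h<n. M i h = 0 \<or> M i h = 1)"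

definition efficient_at :: "nat \<Rightarrow> (nat \<Rightarrow> nat list) \<Rightarrow> (nat \<Rightarrow> nat \<Rightarrow> real) \<Rightarrow> bool" where
  "efficient_at n R M \<longleftrightarrow> deterministic n M \<and>
     \<not> (\<exists>M'. deterministic n M' \<and> (\<exists>i<n. \<exists>h<n. M' i h \<noteq> M i h) \<and>
          (\<forall>i<n. \<forall>h<n. \<forall>h'<n. h \<noteq> h' \<longrightarrow> M' i h' = 1 \<longrightarrow> M i h = 1 \<longrightarrow>
               prefers (R i) h' h))"

definition assignment_rule :: "nat \<Rightarrow> ((nat \<Rightarrow> nat list) \<Rightarrow> nat \<Rightarrow> nat \<Rightarrow> real) \<Rightarrow> bool" where
  "assignment_rule n f \<longleftrightarrow> (\<forall>R. domain_gt n R \<longrightarrow> bistochastic n (f R))"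

definition ex_post_efficient :: "nat \<Rightarrow> ((nat \<Rightarrow> nat list) \<Rightarrow> nat \<Rightarrow> nat \<Rightarrow> real) \<Rightarrow> bool" where
  "ex_post_efficient n f \<longleftrightarrow> (\<forall>R. domain_gt n R \<longrightarrow>
     (\<exists>(k::nat) (w::nat \<Rightarrow> real) (Ms::nat \<Rightarrow> nat \<Rightarrow> nat \<Rightarrow> real).
        (\<forall>l<k. w l \<ge> 0 \<and> efficient_at n R (Ms l)) \<and> (\<Sum>l<k. w l) = 1 \<and>
        (\<forall>i<n. \<forall>h<n. f R i h = (\<Sum>l<k. w l * Ms l i h))))"

definition strategyproof :: "nat \<Rightarrow> ((nat \<Rightarrow> nat list) \<Rightarrow> nat \<Rightarrow> nat \<Rightarrow> real) \<Rightarrow> bool" where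
  "strategyproof n f \<longleftrightarrow> (\<forall>i<n. \<forall>R R'. domain_gt n R \<longrightarrow> domain_gt n R' \<longrightarrow>
     (\<forall>j. j \<noteq> i \<longrightarrow> R j = R' j) \<longrightarrow>
     (\<forall>h<n. (\<Sum>h'\<in>{h'. h' < n \<and> prefers (R i) h' h}. f R i h')
            \<ge> (\<Sum>h'\<in>{h'. h' < n \<and> prefers (R i) h' h}. f R' i h')))"

definition equal_treatment :: "nat \<Rightarrow> ((nat \<Rightarrow> nat list) \<Rightarrow> nat \<Rightarrow> nat \<Rightarrow> real) \<Rightarrow> bool" where
  "equal_treatment n f \<longleftrightarrow> (\<forall>R. domain_gt n R \<longrightarrow>
     (\<forall>i<n. \<forall>j<n. R i = R j \<longrightarrow> (\<forall>h<n. f R i h = f R j h)))"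

fun sd_assign :: "(nat \<Rightarrow> nat list) \<Rightarrow> nat list \<Rightarrow> nat set \<Rightarrow> nat \<Rightarrow> nat" where
  "sd_assign R [] A = (\<lambda>_. 0)"
| "sd_assign R (i # is) A =
     (let h = hd (filter (\<lambda>x. x \<in> A) (R i)) in (sd_assign R is (A - {h}))(i := h))"

definition SD :: "nat \<Rightarrow> nat list \<Rightarrow> (nat \<Rightarrow> nat list) \<Rightarrow> nat \<Rightarrow> nat \<Rightarrow> real" where
  "SD n \<pi> R i h = (if sd_assign R \<pi> {0..<n} i = h then 1 else 0)"

definition RSD :: "nat \<Rightarrow> (nat \<Rightarrow> nat list) \<Rightarrow> nat \<Rightarrow> nat \<Rightarrow> real" where
  "RSD n R i h = (1 / fact n) * (\<Sum>\<pi>\<in>permutations_of_set {0..<n}. SD n \<pi> R i h)"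

end

theory Submission
  imports Defs
begin


declare atLeast0LessThan [simp]

lemma rank_Cons: "rank (a # p) h = (if a = h then 0 else Suc (rank p h))"
  by (simp add: rank_def)

lemma rank_hd_filter:
  assumes "x \<in> set p" "P x"
  shows "rank p (hd (filter P p)) \<le> rank p x"
  using assms
proof (induction p)
  case Nil then show ?case by simp
next
  case (Cons a p)
  show ?case
  proof (cases "P a")
    case True then show ?thesis by (simp add: rank_Cons)
  next
    case False
    then have xa: "x \<noteq> a" using Cons.prems by auto
    with Cons.prems have xp: "x \<in> set p" by simp
    then have "filter P p \<noteq> []" using Cons.prems(2) by (metis (mono_tags) filter_empty_conv)
    then have "hd (filter P p) \<in> set (filter P p)" by (rule hd_in_set)
    then have "P (hd (filter P p))" by simp
    then have "hd (filter P p) \<noteq> a" using False by auto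
    then show ?thesis using False xa Cons.IH[OF xp Cons.prems(2)] by (simp add: rank_Cons)
  qed
qed

lemma hd_filter_mem:
  assumes "x \<in> set p" "P x"
  shows "hd (filter P p) \<in> set p \<and> P (hd (filter P p))"
proof -
  have "filter P p \<noteq> []" using assms by (metis (mono_tags) filter_empty_conv)
  then have "hd (filter P p) \<in> set (filter P p)" by (rule hd_in_set)
  then show ?thesis by simp
qed

lemma sd_Cons:
  "sd_assign R (i # is) A = (sd_assign R is (A - {hd (filter (\<lambda>x. x \<in> A) (R i))}))(i := hd (filter (\<lambda>x. x \<in> A) (R i)))"
  by (simp add: Let_def)

lemma sd_props:
  assumes "distinct is" "finite A" "length is \<le> card A" "\<forall>k\<in>set is. A \<subseteq> set (R k)"
  shows "(\<forall>i\<in>set is. sd_assign R is A i \<in> A) \<and> inj_on (sd_assign R is A) (set is)"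
  using assms
proof (induction "is" arbitrary: A)
  case Nil then show ?case by simp
next
  case (Cons i "is")
  define h where "h = hd (filter (\<lambda>x. x \<in> A) (R i))"
  have "A \<noteq> {}" using Cons.prems(3) by auto
  then obtain x where x: "x \<in> A" by auto
  then have xR: "x \<in> set (R i)" using Cons.prems(4) by auto
  have hA: "h \<in> A" using hd_filter_mem[OF xR, of "\<lambda>x. x \<in> A"] x unfolding h_def by simp
  have IH: "(\<forall>j\<in>set is. sd_assign R is (A - {h}) j \<in> A - {h}) \<and> inj_on (sd_assign R is (A - {h})) (set is)"
    apply (rule Cons.IH)
    using Cons.prems hA by (auto simp: card_Diff_singleton)
  have eq: "sd_assign R (i # is) A = (sd_assign R is (A - {h}))(i := h)"
    unfolding h_def by (simp add: Let_def)
  have ni: "i \<notin> set is" using Cons.prems(1) by simp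
  show ?case
    unfolding eq using IH hA ni
    by (auto simp: inj_on_def)
qed

lemma sd_pareto:
  assumes "distinct is" "finite A" "length is \<le> card A" "\<forall>k\<in>set is. A \<subseteq> set (R k)"
    "inj_on \<sigma> (set is)" "\<sigma> ` set is \<subseteq> A"
    "\<forall>i\<in>set is. \<sigma> i \<noteq> sd_assign R is A i \<longrightarrow> prefers (R i) (\<sigma> i) (sd_assign R is A i)"
  shows "\<forall>i\<in>set is. \<sigma> i = sd_assign R is A i"
  using assms
proof (induction "is" arbitrary: A)
  case Nil then show ?case by simp
next
  case (Cons i "is")
  define h where "h = hd (filter (\<lambda>x. x \<in> A) (R i))"
  have eq: "sd_assign R (i # is) A = (sd_assign R is (A - {h}))(i := h)"
    unfolding h_def by (simp add: Let_def)
  have ni: "i \<notin> set is" using Cons.prems(1) by simp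
  have si: "\<sigma> i \<in> A" using Cons.prems(6) by auto
  then have siR: "\<sigma> i \<in> set (R i)" using Cons.prems(4) by auto
  have "rank (R i) h \<le> rank (R i) (\<sigma> i)"
    unfolding h_def by (rule rank_hd_filter[OF siR]) (use si in simp)
  then have "\<not> prefers (R i) (\<sigma> i) h" by (simp add: prefers_def)
  then have sih: "\<sigma> i = h" using Cons.prems(7) eq by auto
  have sub: "\<sigma> ` set is \<subseteq> A - {h}"
  proof
    fix y assume "y \<in> \<sigma> ` set is"
    then obtain j where j: "j \<in> set is" "y = \<sigma> j" by auto
    then have "j \<noteq> i" using ni by auto
    then have "\<sigma> j \<noteq> \<sigma> i" using Cons.prems(5) j(1) by (auto simp: inj_on_def)
    then show "y \<in> A - {h}" using j Cons.prems(6) sih by auto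
  qed
  have hA: "h \<in> A" using si sih by simp
  have IH: "\<forall>j\<in>set is. \<sigma> j = sd_assign R is (A - {h}) j"
    apply (rule Cons.IH)
    using Cons.prems hA sub ni eq by (auto simp: card_Diff_singleton inj_on_def split: if_splits)
  show ?case using IH sih eq ni by auto
qed

lemma sd_sp:
  assumes "distinct is" "finite A" "length is \<le> card A"
    "\<forall>k\<in>set is. A \<subseteq> set (R k) \<and> A \<subseteq> set (R' k)"
    "\<forall>j. j \<noteq> i \<longrightarrow> R j = R' j" "i \<in> set is"
  shows "rank (R i) (sd_assign R is A i) \<le> rank (R i) (sd_assign R' is A i)"
  using assms
proof (induction "is" arbitrary: A)
  case Nil then show ?case by simp
next
  case (Cons j "is")
  define h where "h = hd (filter (\<lambda>x. x \<in> A) (R j))"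
  define h' where "h' = hd (filter (\<lambda>x. x \<in> A) (R' j))"
  have eq: "sd_assign R (j # is) A = (sd_assign R is (A - {h}))(j := h)"
    unfolding h_def by (simp add: Let_def)
  have eq': "sd_assign R' (j # is) A = (sd_assign R' is (A - {h'}))(j := h')"
    unfolding h'_def by (simp add: Let_def)
  have "A \<noteq> {}" using Cons.prems(3) by auto
  then obtain x where x: "x \<in> A" by auto
  have h'A: "h' \<in> A" using hd_filter_mem[of x "R' j" "\<lambda>x. x \<in> A"] x Cons.prems(4) unfolding h'_def by auto
  have hA: "h \<in> A" using hd_filter_mem[of x "R j" "\<lambda>x. x \<in> A"] x Cons.prems(4) unfolding h_def by auto
  show ?case
  proof (cases "j = i")
    case True
    have "h' \<in> set (R i)" using h'A Cons.prems(4) True by auto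
    then have "rank (R i) h \<le> rank (R i) h'"
      unfolding h_def True by (rule rank_hd_filter) (use h'A in simp)
    then show ?thesis using eq eq' True by simp
  next
    case False
    then have "R j = R' j" using Cons.prems(5) by auto
    then have hh: "h = h'" unfolding h_def h'_def by simp
    have iis: "i \<in> set is" using Cons.prems(6) False by simp
    have "rank (R i) (sd_assign R is (A - {h}) i) \<le> rank (R i) (sd_assign R' is (A - {h}) i)"
      apply (rule Cons.IH)
      using Cons.prems hA iis by (auto simp: card_Diff_singleton)
    then show ?thesis using eq eq' hh False by simp
  qed
qed

lemma sd_map:
  assumes "inj \<tau>"
  shows "sd_assign R (map \<tau> \<pi>) A (\<tau> x) = sd_assign (R \<circ> \<tau>) \<pi> A x"
proof (induction \<pi> arbitrary: A)
  case Nil then show ?case by simp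
next
  case (Cons p ps)
  show ?case
    using Cons.IH assms by (auto simp: Let_def inj_eq)
qed


lemma prof_pref: "is_profile n R \<Longrightarrow> i < n \<Longrightarrow> distinct (R i) \<and> set (R i) = {..<n}"
  by (auto simp: is_profile_def is_pref_def)

lemma perm_facts: "\<pi> \<in> permutations_of_set {0..<n} \<Longrightarrow> distinct \<pi> \<and> set \<pi> = {..<n} \<and> length \<pi> = n"
  by (auto simp: permutations_of_set_def distinct_card[symmetric])

lemma sd_prof:
  assumes "is_profile n R" "\<pi> \<in> permutations_of_set {0..<n}"
  shows "(\<forall>i<n. sd_assign R \<pi> {0..<n} i < n) \<and> inj_on (sd_assign R \<pi> {0..<n}) {..<n}"
proof -
  have p: "distinct \<pi>" "set \<pi> = {..<n}" "length \<pi> = n" using perm_facts[OF assms(2)] by auto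
  have "(\<forall>i\<in>set \<pi>. sd_assign R \<pi> {..<n} i \<in> {..<n}) \<and> inj_on (sd_assign R \<pi> {..<n}) (set \<pi>)"
    by (rule sd_props) (use p prof_pref[OF assms(1)] in auto)
  then show ?thesis using p by auto
qed

lemma sd_surj:
  assumes "is_profile n R" "\<pi> \<in> permutations_of_set {0..<n}" "h < n"
  shows "\<exists>i<n. sd_assign R \<pi> {0..<n} i = h"
proof -
  let ?s = "sd_assign R \<pi> {0..<n}"
  have a: "\<forall>i<n. ?s i < n" "inj_on ?s {..<n}" using sd_prof[OF assms(1,2)] by auto
  have sub: "?s ` {..<n} \<subseteq> {..<n}" using a(1) by auto
  have "card (?s ` {..<n}) = n" using card_image[OF a(2)] by simp
  then have "?s ` {..<n} = {..<n}" using sub by (simp add: card_subset_eq)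
  then have "h \<in> ?s ` {..<n}" using assms(3) by simp
  then show ?thesis by auto
qed

lemma SD_row:
  assumes "is_profile n R" "\<pi> \<in> permutations_of_set {0..<n}" "i < n"
  shows "(\<Sum>h<n. SD n \<pi> R i h) = 1"
proof -
  have "sd_assign R \<pi> {0..<n} i < n" using sd_prof[OF assms(1,2)] assms(3) by auto
  then show ?thesis unfolding SD_def by (simp add: sum.delta)
qed

lemma SD_col:
  assumes "is_profile n R" "\<pi> \<in> permutations_of_set {0..<n}" "h < n"
  shows "(\<Sum>i<n. SD n \<pi> R i h) = 1"
proof -
  let ?s = "sd_assign R \<pi> {0..<n}"
  obtain j where j: "j < n" "?s j = h" using sd_surj[OF assms] by auto
  have inj: "inj_on ?s {..<n}" using sd_prof[OF assms(1,2)] by auto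
  have "(\<Sum>i<n. SD n \<pi> R i h) = (\<Sum>i<n. if i = j then 1 else 0)"
  proof (rule sum.cong)
    fix i assume "i \<in> {..<n}"
    then show "SD n \<pi> R i h = (if i = j then 1 else 0)"
      using j inj unfolding SD_def inj_on_def by auto
  qed simp
  then show ?thesis using j by simp
qed

lemma SD_det:
  assumes "is_profile n R" "\<pi> \<in> permutations_of_set {0..<n}"
  shows "deterministic n (SD n \<pi> R)"
  unfolding deterministic_def bistochastic_def
  using SD_row[OF assms] SD_col[OF assms] by (auto simp: SD_def)

lemma det_row_one:
  assumes "deterministic n M" "i < n"
  shows "\<exists>h<n. M i h = 1"
proof (rule ccontr)
  assume "\<not> ?thesis"
  then have "\<forall>h<n. M i h = 0" using assms unfolding deterministic_def by blast
  then have "(\<Sum>h<n. M i h) = 0" by simp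
  then show False using assms unfolding deterministic_def bistochastic_def by auto
qed

lemma det_row_unique:
  assumes "deterministic n M" "i < n" "a < n" "b < n" "M i a = 1" "M i b = 1"
  shows "a = b"
proof (rule ccontr)
  assume ab: "a \<noteq> b"
  have nn: "\<forall>h\<in>{..<n}. 0 \<le> M i h" using assms(1,2) unfolding deterministic_def bistochastic_def by auto
  have "(\<Sum>h\<in>{a,b}. M i h) \<le> (\<Sum>h<n. M i h)"
    by (rule sum_mono2) (use assms nn in auto)
  then show False using ab assms unfolding deterministic_def bistochastic_def by auto
qed

lemma det_col_unique:
  assumes "deterministic n M" "h < n" "a < n" "b < n" "M a h = 1" "M b h = 1"
  shows "a = b"
proof (rule ccontr)
  assume ab: "a \<noteq> b"
  have nn: "\<forall>i\<in>{..<n}. 0 \<le> M i h" using assms(1,2) unfolding deterministic_def bistochastic_def by auto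
  have "(\<Sum>i\<in>{a,b}. M i h) \<le> (\<Sum>i<n. M i h)"
    by (rule sum_mono2) (use assms nn in auto)
  then show False using ab assms unfolding deterministic_def bistochastic_def by auto
qed

lemma SD_eff:
  assumes "is_profile n R" "\<pi> \<in> permutations_of_set {0..<n}"
  shows "efficient_at n R (SD n \<pi> R)"
  unfolding efficient_at_def
proof (intro conjI notI)
  show "deterministic n (SD n \<pi> R)" by (rule SD_det[OF assms])
  let ?s = "sd_assign R \<pi> {0..<n}"
  have p: "distinct \<pi>" "set \<pi> = {..<n}" "length \<pi> = n" using perm_facts[OF assms(2)] by auto
  have srange: "\<forall>i<n. ?s i < n" using sd_prof[OF assms] by auto
  assume "\<exists>M'. deterministic n M' \<and> (\<exists>i<n. \<exists>h<n. M' i h \<noteq> SD n \<pi> R i h) \<and>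
          (\<forall>i<n. \<forall>h<n. \<forall>h'<n. h \<noteq> h' \<longrightarrow> M' i h' = 1 \<longrightarrow> SD n \<pi> R i h = 1 \<longrightarrow> prefers (R i) h' h)"
  then obtain M' where M': "deterministic n M'" and dif: "\<exists>i<n. \<exists>h<n. M' i h \<noteq> SD n \<pi> R i h"
    and par: "\<forall>i<n. \<forall>h<n. \<forall>h'<n. h \<noteq> h' \<longrightarrow> M' i h' = 1 \<longrightarrow> SD n \<pi> R i h = 1 \<longrightarrow> prefers (R i) h' h"
    by blast
  have "\<forall>i. \<exists>h. i < n \<longrightarrow> h < n \<and> M' i h = 1" using det_row_one[OF M'] by blast
  then obtain \<sigma> where sig: "\<And>i. i < n \<Longrightarrow> \<sigma> i < n \<and> M' i (\<sigma> i) = 1" by metis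
  have inj: "inj_on \<sigma> (set \<pi>)"
    unfolding inj_on_def p using sig det_col_unique[OF M'] by (metis lessThan_iff)
  have "\<forall>i\<in>set \<pi>. \<sigma> i = sd_assign R \<pi> {..<n} i"
  proof (rule sd_pareto)
    show "\<forall>i\<in>set \<pi>. \<sigma> i \<noteq> sd_assign R \<pi> {..<n} i \<longrightarrow> prefers (R i) (\<sigma> i) (sd_assign R \<pi> {..<n} i)"
    proof (intro ballI impI)
      fix i assume i: "i \<in> set \<pi>" "\<sigma> i \<noteq> sd_assign R \<pi> {..<n} i"
      have "i < n" using i p by auto
      then show "prefers (R i) (\<sigma> i) (sd_assign R \<pi> {..<n} i)"
        using par sig srange i(2) unfolding SD_def by force
    qed
  qed (use p inj sig prof_pref[OF assms(1)] in auto)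
  then have eqs: "\<And>i. i < n \<Longrightarrow> \<sigma> i = ?s i" using p by auto
  obtain i h where ih: "i < n" "h < n" "M' i h \<noteq> SD n \<pi> R i h" using dif by blast
  have m01: "M' i h = 0 \<or> M' i h = 1" using M' ih unfolding deterministic_def by auto
  show False
  proof (cases "h = \<sigma> i")
    case True then show False using ih sig eqs unfolding SD_def by auto
  next
    case False
    then have "M' i h \<noteq> 1" using det_row_unique[OF M' ih(1) ih(2)] sig ih by metis
    then have "M' i h = 0" using m01 by simp
    then show False using ih False eqs unfolding SD_def by auto
  qed
qed


abbreviation "PS n \<equiv> permutations_of_set {..<(n::nat)}"

lemma card_PS: "card (PS n) = fact n" by simp

lemma RSD_alt: "RSD n R i h = (1 / fact n) * (\<Sum>\<pi>\<in>PS n. SD n \<pi> R i h)"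
  by (simp add: RSD_def)

lemma RSD_bist:
  assumes "is_profile n R"
  shows "bistochastic n (RSD n R)"
  unfolding bistochastic_def
proof (intro conjI allI impI)
  fix i h assume "i < n" "h < n"
  show "0 \<le> RSD n R i h" unfolding RSD_alt SD_def by (intro mult_nonneg_nonneg sum_nonneg) auto
next
  fix i assume i: "i < n"
  have "(\<Sum>h<n. RSD n R i h) = (1 / fact n) * (\<Sum>\<pi>\<in>PS n. \<Sum>h<n. SD n \<pi> R i h)"
    unfolding RSD_alt by (simp add: sum_distrib_left sum.swap[of _ "{..<n}"])
  also have "\<dots> = (1 / fact n) * (\<Sum>\<pi>\<in>PS n. 1)"
    using SD_row[OF assms _ i] by simp
  also have "\<dots> = 1" by simp
  finally show "(\<Sum>h<n. RSD n R i h) = 1" .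
next
  fix h assume h: "h < n"
  have "(\<Sum>i<n. RSD n R i h) = (1 / fact n) * (\<Sum>\<pi>\<in>PS n. \<Sum>i<n. SD n \<pi> R i h)"
    unfolding RSD_alt by (simp add: sum_distrib_left sum.swap[of _ "{..<n}"])
  also have "\<dots> = (1 / fact n) * (\<Sum>\<pi>\<in>PS n. 1)"
    using SD_col[OF assms _ h] by simp
  also have "\<dots> = 1" by simp
  finally show "(\<Sum>i<n. RSD n R i h) = 1" .
qed

definition swp :: "nat \<Rightarrow> nat \<Rightarrow> nat \<Rightarrow> nat" where
  "swp a b x = (if x = a then b else if x = b then a else x)"

lemma swp_inj: "inj (swp a b)"
  unfolding inj_def swp_def by auto

lemma swp_swp: "swp a b (swp a b x) = x"
  unfolding swp_def by auto

lemma RSD_ete: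
  assumes "is_profile n R" "i < n" "j < n" "R i = R j"
  shows "RSD n R i h = RSD n R j h"
proof -
  let ?t = "swp i j"
  have Rt: "R \<circ> ?t = R" using assms(4) by (auto simp: swp_def)
  have mem: "map ?t \<pi> \<in> PS n" if "\<pi> \<in> PS n" for \<pi>
  proof -
    have p: "distinct \<pi>" "set \<pi> = {..<n}" using perm_facts[of \<pi> n] that by auto
    have "?t ` {..<n} \<subseteq> {..<n}" using assms(2,3) by (auto simp: swp_def)
    moreover have "card (?t ` {..<n}) = n"
      using card_image[OF inj_on_subset[OF swp_inj subset_UNIV]] by simp
    ultimately have "?t ` {..<n} = {..<n}" by (simp add: card_subset_eq)
    then show ?thesis using p inj_on_subset[OF swp_inj subset_UNIV] by (auto simp: permutations_of_set_def distinct_map)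
  qed
  have "(\<Sum>\<pi>\<in>PS n. SD n \<pi> R i h) = (\<Sum>\<pi>\<in>PS n. SD n (map ?t \<pi>) R i h)"
    by (rule sum.reindex_bij_witness[of _ "map ?t" "map ?t"]) (auto simp: mem comp_def swp_swp)
  also have "\<dots> = (\<Sum>\<pi>\<in>PS n. SD n \<pi> R j h)"
  proof (rule sum.cong)
    fix \<pi> assume "\<pi> \<in> PS n"
    have "sd_assign R (map ?t \<pi>) {..<n} (?t j) = sd_assign (R \<circ> ?t) \<pi> {..<n} j"
      by (rule sd_map[OF swp_inj])
    then have "sd_assign R (map ?t \<pi>) {..<n} i = sd_assign R \<pi> {..<n} j"
      using Rt by (cases "i = j") (simp_all add: swp_def)
    then show "SD n (map ?t \<pi>) R i h = SD n \<pi> R j h" by (simp add: SD_def)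
  qed simp
  finally show ?thesis unfolding RSD_alt by simp
qed

lemma SD_sum_set:
  assumes "S \<subseteq> {..<n}" "is_profile n R" "\<pi> \<in> PS n" "i < n"
  shows "(\<Sum>h'\<in>S. SD n \<pi> R i h') = (if sd_assign R \<pi> {..<n} i \<in> S then 1 else 0)"
proof -
  have "finite S" using assms(1) finite_subset by blast
  then show ?thesis unfolding SD_def by (simp add: sum.delta)
qed

lemma RSD_sp:
  assumes "is_profile n R" "is_profile n R'" "\<forall>j. j \<noteq> i \<longrightarrow> R j = R' j" "i < n"
  shows "(\<Sum>h'\<in>{h'. h' < n \<and> prefers (R i) h' h}. RSD n R i h')
       \<ge> (\<Sum>h'\<in>{h'. h' < n \<and> prefers (R i) h' h}. RSD n R' i h')"
proof -
  let ?S = "{h'. h' < n \<and> prefers (R i) h' h}"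
  have S: "?S \<subseteq> {..<n}" by auto
  have eq: "(\<Sum>h'\<in>?S. RSD n Q i h') = (1 / fact n) * (\<Sum>\<pi>\<in>PS n. if sd_assign Q \<pi> {..<n} i \<in> ?S then 1 else 0)"
    if "is_profile n Q" for Q
  proof -
    have "(\<Sum>h'\<in>?S. RSD n Q i h') = (1 / fact n) * (\<Sum>\<pi>\<in>PS n. \<Sum>h'\<in>?S. SD n \<pi> Q i h')"
      unfolding RSD_alt by (simp add: sum_distrib_left sum.swap[of _ ?S])
    also have "\<dots> = (1 / fact n) * (\<Sum>\<pi>\<in>PS n. if sd_assign Q \<pi> {..<n} i \<in> ?S then 1 else 0)"
      using SD_sum_set[OF S that _ assms(4)] by simp
    finally show ?thesis .
  qed
  have le: "(if sd_assign R' \<pi> {..<n} i \<in> ?S then 1 else 0) \<le> (if sd_assign R \<pi> {..<n} i \<in> ?S then (1::real) else 0)"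
    if p: "\<pi> \<in> PS n" for \<pi>
  proof -
    have pf: "distinct \<pi>" "set \<pi> = {..<n}" "length \<pi> = n" using perm_facts[of \<pi> n] p by auto
    have r: "rank (R i) (sd_assign R \<pi> {..<n} i) \<le> rank (R i) (sd_assign R' \<pi> {..<n} i)"
      by (rule sd_sp) (use pf assms prof_pref[OF assms(1)] prof_pref[OF assms(2)] in auto)
    have "sd_assign R \<pi> {..<n} i < n" using sd_prof[OF assms(1)] p assms(4) by auto
    then show ?thesis using r by (auto simp: prefers_def)
  qed
  show ?thesis
    unfolding eq[OF assms(1)] eq[OF assms(2)]
    by (rule mult_left_mono, rule sum_mono, rule le) auto
qed

lemma convex_witness:
  assumes "finite P" "card P = fact n"
  shows "\<exists>(k::nat) (w::nat \<Rightarrow> real) (Ms::nat \<Rightarrow> nat \<Rightarrow> nat \<Rightarrow> real).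
        (\<forall>l<k. w l \<ge> 0 \<and> (\<exists>\<pi>\<in>P. Ms l = SD n \<pi> R)) \<and> (\<Sum>l<k. w l) = 1 \<and>
        (\<forall>i h. (1 / fact n) * (\<Sum>\<pi>\<in>P. SD n \<pi> R i h) = (\<Sum>l<k. w l * Ms l i h))"
proof -
  obtain xs where xs: "set xs = P" "distinct xs" using finite_distinct_list[OF assms(1)] by blast
  have len: "length xs = fact n" using assms(2) xs distinct_card by fastforce
  have sums: "(\<Sum>\<pi>\<in>P. g \<pi>) = (\<Sum>l<length xs. g (xs ! l))" for g :: "nat list \<Rightarrow> real"
  proof -
    have "sum g P = sum g (set xs)" using xs by simp
    also have "\<dots> = sum_list (map g xs)" using xs(2) by (rule sum.distinct_set_conv_list)
    also have "\<dots> = (\<Sum>l<length xs. g (xs!l))" by (simp add: sum_list_sum_nth)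
    finally show ?thesis .
  qed
  show ?thesis
    apply (rule exI[of _ "length xs"], rule exI[of _ "\<lambda>l. 1 / fact n"], rule exI[of _ "\<lambda>l. SD n (xs ! l) R"])
    apply (intro conjI allI)
    subgoal using xs by auto
    subgoal using len by simp
    subgoal for i h unfolding sums by (simp add: sum_distrib_left)
    done
qed

lemma RSD_expost:
  assumes "is_profile n R"
  shows "\<exists>(k::nat) (w::nat \<Rightarrow> real) (Ms::nat \<Rightarrow> nat \<Rightarrow> nat \<Rightarrow> real).
        (\<forall>l<k. w l \<ge> 0 \<and> efficient_at n R (Ms l)) \<and> (\<Sum>l<k. w l) = 1 \<and>
        (\<forall>i<n. \<forall>h<n. RSD n R i h = (\<Sum>l<k. w l * Ms l i h))"
proof -
  obtain k :: nat and w :: "nat \<Rightarrow> real" and Ms :: "nat \<Rightarrow> nat \<Rightarrow> nat \<Rightarrow> real" where W: "\<forall>l<k. w l \<ge> 0 \<and> (\<exists>\<pi>\<in>PS n. Ms l = SD n \<pi> R)" "(\<Sum>l<k. w l) = 1"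
     "\<forall>i h. (1 / fact n) * (\<Sum>\<pi>\<in>PS n. SD n \<pi> R i h) = (\<Sum>l<k. w l * Ms l i h)"
    using convex_witness[of "PS n" n R, OF finite_permutations_of_set card_PS] by blast
  show ?thesis
    apply (rule exI[of _ k], rule exI[of _ w], rule exI[of _ Ms])
    using W SD_eff[OF assms] by (auto simp: RSD_alt)
qed



definition perms4 :: "nat list list" where
  "perms4 = [[3, 2, 1, 0], [2, 3, 1, 0], [3, 1, 2, 0], [1, 3, 2, 0], [2, 1, 3, 0], [1, 2, 3, 0], [3, 2, 0, 1], [2, 3, 0, 1], [3, 0, 2, 1], [0, 3, 2, 1], [2, 0, 3, 1], [0, 2, 3, 1], [3, 1, 0, 2], [1, 3, 0, 2], [3, 0, 1, 2], [0, 3, 1, 2], [1, 0, 3, 2], [0, 1, 3, 2], [2, 1, 0, 3], [1, 2, 0, 3], [2, 0, 1, 3], [0, 2, 1, 3], [1, 0, 2, 3], [0, 1, 2, 3]]"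

lemma perms4_eq: "permutations_of_set_list [0,1,2,3] = perms4"
  by (simp add: permutations_of_set_list_def permutations_of_set_aux_list.simps perms4_def)

lemma lt4: "{..<4::nat} = set [0,1,2,3]" by auto

lemma PS4: "PS 4 = set perms4"
  unfolding lt4 permutations_of_list perms4_eq[symmetric] by simp

lemma perms4_distinct: "distinct perms4"
  by (simp add: perms4_def)

definition fromkey :: "nat list list \<Rightarrow> nat \<Rightarrow> nat list" where
  "fromkey K j = (if j < 4 then K ! j else [])"

definition cnt :: "nat list \<Rightarrow> nat \<Rightarrow> nat" where
  "cnt xs h = sum_list (map (\<lambda>x. if x = h then 1 else 0) xs)"

definition rsdrow :: "nat list list \<Rightarrow> nat \<Rightarrow> nat list" where
  "rsdrow K i = (let xs = map (\<lambda>\<pi>. sd_assign (fromkey K) \<pi> {..<4} i) perms4 in map (\<lambda>h. 2 * cnt xs h) [0,1,2,3])"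

definition e0 :: "nat list list \<times> nat list list" where
  "e0 = ([[0, 1, 2, 3], [0, 1, 3, 2], [0, 2, 1, 3], [0, 2, 1, 3]], [[12, 16, 8, 12], [12, 20, 0, 16], [12, 6, 20, 10], [12, 6, 20, 10]])"

definition v0 :: "nat list list \<times> (nat \<times> nat list) list" where
  "v0 = ([[0, 1, 2, 3], [0, 1, 3, 2], [0, 2, 1, 3], [0, 2, 1, 3]], [(2, [0, 2, 1, 3]), (10, [0, 3, 1, 2]), (6, [1, 2, 3, 0]), (6, [1, 3, 2, 0]), (8, [2, 1, 0, 3]), (4, [2, 3, 0, 1]), (12, [3, 2, 0, 1])])"

definition e1 :: "nat list list \<times> nat list list" where
  "e1 = ([[0, 1, 2, 3], [0, 1, 3, 2], [0, 2, 1, 3], [2, 0, 1, 3]], [[16, 16, 4, 12], [16, 18, 0, 14], [16, 8, 12, 12], [0, 6, 32, 10]])"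

definition v1 :: "nat list list \<times> (nat \<times> nat list) list" where
  "v1 = ([[0, 1, 2, 3], [0, 1, 3, 2], [0, 2, 1, 3], [2, 0, 1, 3]], [(12, [0, 1, 3, 2]), (6, [1, 0, 2, 3]), (6, [1, 2, 3, 0]), (4, [2, 1, 0, 3]), (10, [2, 3, 0, 1]), (4, [3, 0, 2, 1]), (4, [3, 1, 2, 0]), (2, [3, 2, 1, 0])])"

definition e2 :: "nat list list \<times> nat list list" where
  "e2 = ([[0, 1, 2, 3], [0, 1, 3, 2], [2, 0, 1, 3], [0, 2, 1, 3]], [[16, 16, 4, 12], [16, 18, 0, 14], [0, 6, 32, 10], [16, 8, 12, 12]])"

definition v2 :: "nat list list \<times> (nat \<times> nat list) list" where
  "v2 = ([[0, 1, 2, 3], [0, 1, 3, 2], [2, 0, 1, 3], [0, 2, 1, 3]], [(4, [0, 1, 2, 3]), (6, [0, 3, 1, 2]), (6, [0, 3, 2, 1]), (8, [1, 0, 2, 3]), (8, [2, 1, 3, 0]), (4, [2, 3, 1, 0]), (8, [3, 0, 1, 2]), (4, [3, 1, 0, 2])])"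

definition e3 :: "nat list list \<times> nat list list" where
  "e3 = ([[0, 1, 3, 2], [0, 1, 2, 3], [0, 2, 1, 3], [0, 2, 1, 3]], [[12, 20, 0, 16], [12, 16, 8, 12], [12, 6, 20, 10], [12, 6, 20, 10]])"

definition v3 :: "nat list list \<times> (nat \<times> nat list) list" where
  "v3 = ([[0, 1, 3, 2], [0, 1, 2, 3], [0, 2, 1, 3], [0, 2, 1, 3]], [(2, [0, 1, 2, 3]), (4, [0, 2, 3, 1]), (6, [0, 3, 2, 1]), (10, [1, 0, 3, 2]), (2, [1, 2, 3, 0]), (8, [2, 0, 1, 3]), (2, [2, 0, 3, 1]), (2, [2, 1, 0, 3]), (12, [3, 2, 1, 0])])"

definition e4 :: "nat list list \<times> nat list list" where
  "e4 = ([[0, 1, 3, 2], [0, 1, 2, 3], [0, 2, 1, 3], [2, 0, 1, 3]], [[16, 18, 0, 14], [16, 16, 4, 12], [16, 8, 12, 12], [0, 6, 32, 10]])"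

definition v4 :: "nat list list \<times> (nat \<times> nat list) list" where
  "v4 = ([[0, 1, 3, 2], [0, 1, 2, 3], [0, 2, 1, 3], [2, 0, 1, 3]], [(4, [0, 1, 2, 3]), (12, [0, 3, 1, 2]), (2, [1, 2, 0, 3]), (6, [1, 2, 3, 0]), (4, [2, 0, 1, 3]), (12, [2, 3, 0, 1]), (8, [3, 1, 2, 0])])"

definition e5 :: "nat list list \<times> nat list list" where
  "e5 = ([[0, 1, 3, 2], [0, 1, 2, 3], [2, 0, 1, 3], [0, 2, 1, 3]], [[16, 18, 0, 14], [16, 16, 4, 12], [0, 6, 32, 10], [16, 8, 12, 12]])"

definition v5 :: "nat list list \<times> (nat \<times> nat list) list" where
  "v5 = ([[0, 1, 3, 2], [0, 1, 2, 3], [2, 0, 1, 3], [0, 2, 1, 3]], [(10, [0, 2, 1, 3]), (6, [0, 3, 2, 1]), (6, [1, 3, 0, 2]), (2, [2, 1, 0, 3]), (8, [2, 1, 3, 0]), (6, [2, 3, 1, 0]), (4, [3, 0, 1, 2]), (6, [3, 2, 0, 1])])"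

definition e6 :: "nat list list \<times> nat list list" where
  "e6 = ([[0, 1, 3, 2], [0, 1, 3, 2], [0, 1, 2, 3], [0, 2, 1, 3]], [[12, 16, 0, 20], [12, 16, 0, 20], [12, 16, 16, 4], [12, 0, 32, 4]])"

definition v6 :: "nat list list \<times> (nat \<times> nat list) list" where
  "v6 = ([[0, 1, 3, 2], [0, 1, 3, 2], [0, 1, 2, 3], [0, 2, 1, 3]], [(4, [0, 1, 2, 3]), (4, [0, 2, 1, 3]), (4, [0, 3, 1, 2]), (12, [1, 3, 2, 0]), (4, [2, 0, 1, 3]), (8, [2, 1, 3, 0]), (12, [3, 0, 1, 2])])"

definition e7 :: "nat list list \<times> nat list list" where
  "e7 = ([[0, 1, 3, 2], [0, 1, 3, 2], [0, 2, 1, 3], [0, 1, 2, 3]], [[12, 16, 0, 20], [12, 16, 0, 20], [12, 0, 32, 4], [12, 16, 16, 4]])"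

definition v7 :: "nat list list \<times> (nat \<times> nat list) list" where
  "v7 = ([[0, 1, 3, 2], [0, 1, 3, 2], [0, 2, 1, 3], [0, 1, 2, 3]], [(4, [0, 1, 2, 3]), (4, [0, 1, 3, 2]), (4, [0, 3, 1, 2]), (12, [1, 3, 2, 0]), (12, [2, 0, 3, 1]), (4, [3, 0, 1, 2]), (8, [3, 2, 1, 0])])"

definition e8 :: "nat list list \<times> nat list list" where
  "e8 = ([[0, 1, 3, 2], [0, 1, 3, 2], [0, 2, 1, 3], [0, 2, 1, 3]], [[12, 16, 0, 20], [12, 16, 0, 20], [12, 8, 24, 4], [12, 8, 24, 4]])"

definition v8 :: "nat list list \<times> (nat \<times> nat list) list" where
  "v8 = ([[0, 1, 3, 2], [0, 1, 3, 2], [0, 2, 1, 3], [0, 2, 1, 3]], [(8, [0, 2, 3, 1]), (4, [0, 3, 2, 1]), (4, [1, 2, 0, 3]), (4, [1, 3, 0, 2]), (4, [1, 3, 2, 0]), (8, [2, 0, 1, 3]), (4, [2, 1, 3, 0]), (12, [3, 1, 2, 0])])"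

definition e9 :: "nat list list \<times> nat list list" where
  "e9 = ([[0, 1, 3, 2], [0, 1, 3, 2], [0, 2, 1, 3], [2, 0, 1, 3]], [[16, 16, 0, 16], [16, 16, 0, 16], [16, 8, 12, 12], [0, 8, 36, 4]])"

definition v9 :: "nat list list \<times> (nat \<times> nat list) list" where
  "v9 = ([[0, 1, 3, 2], [0, 1, 3, 2], [0, 2, 1, 3], [2, 0, 1, 3]], [(8, [0, 2, 3, 1]), (4, [1, 2, 0, 3]), (16, [2, 1, 3, 0]), (8, [3, 0, 2, 1]), (12, [3, 1, 0, 2])])"

definition e10 :: "nat list list \<times> nat list list" where
  "e10 = ([[0, 1, 3, 2], [0, 1, 3, 2], [2, 0, 1, 3], [0, 2, 1, 3]], [[16, 16, 0, 16], [16, 16, 0, 16], [0, 8, 36, 4], [16, 8, 12, 12]])"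

definition v10 :: "nat list list \<times> (nat \<times> nat list) list" where
  "v10 = ([[0, 1, 3, 2], [0, 1, 3, 2], [2, 0, 1, 3], [0, 2, 1, 3]], [(12, [0, 1, 2, 3]), (4, [0, 3, 2, 1]), (4, [1, 3, 0, 2]), (4, [1, 3, 2, 0]), (8, [2, 1, 3, 0]), (4, [2, 3, 1, 0]), (12, [3, 0, 2, 1])])"

definition tbl :: "(nat list list \<times> nat list list) list" where
  "tbl = [e0, e1, e2, e3, e4, e5, e6, e7, e8, e9, e10]"

definition wtab :: "(nat list list \<times> (nat \<times> nat list) list) list" where
  "wtab = [v0, v1, v2, v3, v4, v5, v6, v7, v8, v9, v10]"

lemmas edefs = e0_def v0_def e1_def v1_def e2_def v2_def e3_def v3_def e4_def v4_def e5_def v5_def e6_def v6_def e7_def v7_def e8_def v8_def e9_def v9_def e10_def v10_def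

definition rown :: "nat list list \<Rightarrow> nat \<Rightarrow> nat list" where
  "rown K i = (case map_of tbl K of Some M \<Rightarrow> M ! i | None \<Rightarrow> rsdrow K i)"

definition cuml :: "nat list \<Rightarrow> nat list \<Rightarrow> nat \<Rightarrow> nat" where
  "cuml p v h = sum_list (map (\<lambda>h'. if prefers p h' h then v ! h' else 0) [0,1,2,3])"

definition dom4 :: "nat list list \<Rightarrow> bool" where
  "dom4 K = (\<exists>hs\<in>set [0,1,2,3]. \<forall>k\<in>set [0,1,2,3]. filter (\<lambda>h. h \<noteq> hs) (K!k) = filter (\<lambda>h. h \<noteq> hs) (K!0))"

definition chk_pair :: "nat list list \<Rightarrow> nat \<Rightarrow> nat list \<Rightarrow> bool" where
  "chk_pair K i p = (let K' = K[i:=p] in if dom4 K' then (let a = rown K i; b = rown K' i in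
      list_all (\<lambda>h. cuml (K!i) b h \<le> cuml (K!i) a h \<and> cuml p a h \<le> cuml p b h) [0,1,2,3]) else True)"

definition ce_len :: "nat list list \<Rightarrow> bool" where
  "ce_len K = (length K = 4)"

definition ce_row :: "nat list list \<Rightarrow> bool" where
  "ce_row M = list_all (\<lambda>i. sum_list (map (\<lambda>h. M!i!h) [0,1,2,3]) = 48) [0,1,2,3]"

definition ce_col :: "nat list list \<Rightarrow> bool" where
  "ce_col M = list_all (\<lambda>h. sum_list (map (\<lambda>i. M!i!h) [0,1,2,3]) = 48) [0,1,2,3]"

definition ce_ete :: "nat list list \<Rightarrow> nat list list \<Rightarrow> bool" where
  "ce_ete K M = list_all (\<lambda>i. list_all (\<lambda>j. K!i = K!j \<longrightarrow> M!i = M!j) [0,1,2,3]) [0,1,2,3]"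

definition ce_w1 :: "(nat \<times> nat list) list \<Rightarrow> bool" where
  "ce_w1 W = (sum_list (map fst W) = 48 \<and> list_all (\<lambda>(c,\<pi>). \<pi> \<in> set perms4) W)"

definition ce_w2 :: "nat list list \<Rightarrow> nat list list \<Rightarrow> (nat \<times> nat list) list \<Rightarrow> bool" where
  "ce_w2 K M W = list_all (\<lambda>i. list_all (\<lambda>h. M!i!h = sum_list (map (\<lambda>(c,\<pi>). if sd_assign (fromkey K) \<pi> {..<4} i = h then c else 0) W)) [0,1,2,3]) [0,1,2,3]"

definition ce_w :: "nat list list \<Rightarrow> nat list list \<Rightarrow> bool" where
  "ce_w K M = (case map_of wtab K of None \<Rightarrow> False | Some W \<Rightarrow> ce_w1 W \<and> ce_w2 K M W)"

definition ce_sp :: "nat list list \<Rightarrow> bool" where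
  "ce_sp K = list_all (\<lambda>i. list_all (chk_pair K i) perms4) [0,1,2,3]"

definition chk_entry :: "nat list list \<times> nat list list \<Rightarrow> bool" where
  "chk_entry e = (case e of (K, M) \<Rightarrow> ce_len K \<and> ce_row M \<and> ce_col M \<and> ce_ete K M \<and> ce_w K M \<and> ce_sp K)"

lemmas CS = ce_len_def ce_row_def ce_col_def ce_ete_def ce_w1_def ce_w2_def ce_w_def ce_sp_def chk_pair_def dom4_def rown_def cuml_def rsdrow_def cnt_def fromkey_def perms4_def tbl_def wtab_def
  prefers_def rank_def Let_def edefs

lemma chk_e0: "chk_entry e0"
  unfolding chk_entry_def by (simp add: CS)

lemma chk_e1: "chk_entry e1"
  unfolding chk_entry_def by (simp add: CS)

lemma chk_e2: "chk_entry e2"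
  unfolding chk_entry_def by (simp add: CS)

lemma chk_e3: "chk_entry e3"
  unfolding chk_entry_def by (simp add: CS)

lemma chk_e4: "chk_entry e4"
  unfolding chk_entry_def by (simp add: CS)

lemma chk_e5: "chk_entry e5"
  unfolding chk_entry_def by (simp add: CS)

lemma chk_e6: "chk_entry e6"
  unfolding chk_entry_def by (simp add: CS)

lemma chk_e7: "chk_entry e7"
  unfolding chk_entry_def by (simp add: CS)

lemma chk_e8: "chk_entry e8"
  unfolding chk_entry_def by (simp add: CS)

lemma chk_e9: "chk_entry e9"
  unfolding chk_entry_def by (simp add: CS)

lemma chk_e10: "chk_entry e10"
  unfolding chk_entry_def by (simp add: CS)

lemma chk_all: "list_all chk_entry tbl"
  unfolding tbl_def using chk_e0 chk_e1 chk_e2 chk_e3 chk_e4 chk_e5 chk_e6 chk_e7 chk_e8 chk_e9 chk_e10 by simp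



definition ff :: "(nat \<Rightarrow> nat list) \<Rightarrow> nat \<Rightarrow> nat \<Rightarrow> real" where
  "ff R i h = (case map_of tbl (map R [0..<4]) of Some M \<Rightarrow> real (M ! i ! h) / 48 | None \<Rightarrow> RSD 4 R i h)"

lemma cases4: "i < (4::nat) \<Longrightarrow> i = 0 \<or> i = 1 \<or> i = 2 \<or> i = 3" by auto

lemma all4: "list_all P [0,1,2,3] \<Longrightarrow> i < (4::nat) \<Longrightarrow> P i"
  using cases4[of i] by auto

lemma nth4: "h < 4 \<Longrightarrow> [0,1,2,3::nat] ! h = h"
  using cases4[of h] by auto

lemma fromkey_map: "length K = 4 \<Longrightarrow> map (fromkey K) [0..<4] = K"
  by (rule nth_equalityI) (auto simp: fromkey_def)

lemma key_fromkey: "is_profile 4 R \<Longrightarrow> fromkey (map R [0..<4]) = R"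
  by (rule ext) (auto simp: fromkey_def is_profile_def)

lemma SD_list: "sum_list (map (\<lambda>\<pi>. SD 4 \<pi> R i h) xs) = real (cnt (map (\<lambda>\<pi>. sd_assign R \<pi> {..<4} i) xs) h)"
  by (induction xs) (auto simp: cnt_def SD_def)

lemma fact4: "fact 4 = (24::real)" by (simp add: fact_numeral)

lemma RSD_comp: "RSD 4 R i h = real (cnt (map (\<lambda>\<pi>. sd_assign R \<pi> {..<4} i) perms4) h) / 24"
proof -
  have "RSD 4 R i h = (1 / fact 4) * (\<Sum>\<pi>\<in>set perms4. SD 4 \<pi> R i h)"
    using RSD_alt[of 4 R i h] PS4 by simp
  also have "\<dots> = (1 / 24) * sum_list (map (\<lambda>\<pi>. SD 4 \<pi> R i h) perms4)"
    using perms4_distinct by (simp add: sum.distinct_set_conv_list fact4)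
  also have "\<dots> = real (cnt (map (\<lambda>\<pi>. sd_assign R \<pi> {..<4} i) perms4) h) / 24"
    by (simp add: SD_list)
  finally show ?thesis .
qed

lemma ff_rown:
  assumes "length K = 4" "h < 4"
  shows "ff (fromkey K) i h = real (rown K i ! h) / 48"
proof (cases "map_of tbl K")
  case None
  then show ?thesis using assms cases4[of h] by (auto simp: ff_def rown_def fromkey_map RSD_comp rsdrow_def Let_def)
next
  case (Some M) then show ?thesis using assms by (simp add: ff_def rown_def fromkey_map)
qed

lemma sum4: "(\<Sum>h<4. g h) = sum_list (map g [0,1,2,3::nat])" for g :: "nat \<Rightarrow> real"
  unfolding lt4 by simp

lemma cum_ff:
  assumes "length K = 4"
  shows "(\<Sum>h'\<in>{h'. h' < 4 \<and> prefers p h' h}. ff (fromkey K) i h') = real (cuml p (rown K i) h) / 48"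
proof -
  have "(\<Sum>h'\<in>{h'. h' < 4 \<and> prefers p h' h}. ff (fromkey K) i h') = (\<Sum>h'\<in>{h'\<in>{..<4}. prefers p h' h}. ff (fromkey K) i h')"
    by (rule sum.cong) auto
  also have "\<dots> = (\<Sum>h'<4. if prefers p h' h then ff (fromkey K) i h' else 0)"
    by (rule sum.inter_filter) simp
  also have "\<dots> = (\<Sum>h'<4. if prefers p h' h then real (rown K i ! h') / 48 else 0)"
    by (rule sum.cong) (auto simp: ff_rown[OF assms])
  also have "\<dots> = real (cuml p (rown K i) h) / 48"
    unfolding sum4 cuml_def by (simp add: add_divide_distrib)
  finally show ?thesis .
qed

lemma entry_of: "map_of tbl K = Some M \<Longrightarrow> chk_entry (K, M)"
  using chk_all map_of_SomeD[of tbl K M] by (auto simp: list_all_iff)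

lemma ce: "chk_entry (K,M) \<Longrightarrow> ce_len K \<and> ce_row M \<and> ce_col M \<and> ce_ete K M \<and> ce_w K M \<and> ce_sp K"
  by (simp add: chk_entry_def)

lemma ff_none: "map_of tbl (map R [0..<4]) = None \<Longrightarrow> ff R = RSD 4 R"
  by (rule ext, rule ext) (simp add: ff_def)

lemma ff_some: "map_of tbl (map R [0..<4]) = Some M \<Longrightarrow> ff R i h = real (M ! i ! h) / 48"
  by (simp add: ff_def)

lemma nth_key: "i < 4 \<Longrightarrow> map R [0..<4] ! i = R i" by simp

lemma sum_nth: "(\<Sum>l<length W. g (W ! l)) = sum_list (map g W)"
proof (induction W)
  case Nil then show ?case by simp
next
  case (Cons a W) then show ?case unfolding length_Cons sum.lessThan_Suc_shift by simp
qed

lemma sum_w: "sum_list (map (\<lambda>e. real (fst e) / 48) W) = real (sum_list (map fst W)) / 48"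
  by (induction W) (auto simp: add_divide_distrib)

lemma sum_w2: "sum_list (map (\<lambda>e. real (fst e) / 48 * (if P (snd e) then 1 else 0)) W)
   = real (sum_list (map (\<lambda>(c,\<pi>). if P \<pi> then c else 0) W)) / 48"
  by (induction W) (auto simp: add_divide_distrib)

lemma ar: "assignment_rule 4 ff"
  unfolding assignment_rule_def
proof (intro allI impI)
  fix R assume d: "domain_gt 4 R"
  then have p: "is_profile 4 R" by (simp add: domain_gt_def)
  show "bistochastic 4 (ff R)"
  proof (cases "map_of tbl (map R [0..<4])")
    case None then show ?thesis using RSD_bist[OF p] ff_none by simp
  next
    case (Some M)
    have c: "chk_entry (map R [0..<4], M)" by (rule entry_of[OF Some])
    show ?thesis unfolding bistochastic_def
    proof (intro conjI allI impI)
      fix i h :: nat show "0 \<le> ff R i h" unfolding ff_some[OF Some] by simp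
    next
      fix i :: nat assume i: "i < 4"
      have r: "ce_row M" using ce[OF c] by simp
      have "sum_list (map (\<lambda>h. M!i!h) [0,1,2,3]) = 48"
        by (rule all4[OF r[unfolded ce_row_def] i])
      then show "(\<Sum>h<4. ff R i h) = 1"
        unfolding sum4 ff_some[OF Some] by (simp add: add_divide_distrib[symmetric] del: of_nat_add)
    next
      fix h :: nat assume h: "h < 4"
      have r: "ce_col M" using ce[OF c] by simp
      have "sum_list (map (\<lambda>i. M!i!h) [0,1,2,3]) = 48"
        by (rule all4[OF r[unfolded ce_col_def] h])
      then show "(\<Sum>i<4. ff R i h) = 1"
        unfolding sum4 ff_some[OF Some] by (simp add: add_divide_distrib[symmetric] del: of_nat_add)
    qed
  qed
qed


lemma ete: "equal_treatment 4 ff"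
  unfolding equal_treatment_def
proof (intro allI impI)
  fix R and i j h :: nat assume d: "domain_gt 4 R" and i: "i < 4" and j: "j < 4" and eq: "R i = R j" and h: "h < 4"
  then have p: "is_profile 4 R" by (simp add: domain_gt_def)
  show "ff R i h = ff R j h"
  proof (cases "map_of tbl (map R [0..<4])")
    case None then show ?thesis using RSD_ete[OF p i j eq] ff_none by simp
  next
    case (Some M)
    have c: "chk_entry (map R [0..<4], M)" by (rule entry_of[OF Some])
    have r: "ce_ete (map R [0..<4]) M" using ce[OF c] by simp
    have "list_all (\<lambda>j. map R [0..<4] ! i = map R [0..<4] ! j \<longrightarrow> M!i = M!j) [0,1,2,3]"
      by (rule all4[OF r[unfolded ce_ete_def] i])
    then have "map R [0..<4] ! i = map R [0..<4] ! j \<longrightarrow> M!i = M!j" using j by (rule all4)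
    then have "M!i = M!j" using eq i j by simp
    then show ?thesis unfolding ff_some[OF Some] by simp
  qed
qed

lemma ep: "ex_post_efficient 4 ff"
  unfolding ex_post_efficient_def
proof (intro allI impI)
  fix R assume d: "domain_gt 4 R"
  then have p: "is_profile 4 R" by (simp add: domain_gt_def)
  show "\<exists>(k::nat) (w::nat \<Rightarrow> real) (Ms::nat \<Rightarrow> nat \<Rightarrow> nat \<Rightarrow> real).
        (\<forall>l<k. w l \<ge> 0 \<and> efficient_at 4 R (Ms l)) \<and> (\<Sum>l<k. w l) = 1 \<and>
        (\<forall>i<4. \<forall>h<4. ff R i h = (\<Sum>l<k. w l * Ms l i h))"
  proof (cases "map_of tbl (map R [0..<4])")
    case None then show ?thesis using RSD_expost[OF p] ff_none[OF None] by simp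
  next
    case (Some M)
    define K where "K = map R [0..<4]"
    have RK: "R = fromkey K" unfolding K_def using key_fromkey[OF p] by simp
    have c: "chk_entry (K, M)" unfolding K_def by (rule entry_of[OF Some])
    have cw: "ce_w K M" using ce[OF c] by simp
    then obtain W where W: "map_of wtab K = Some W" unfolding ce_w_def by (auto split: option.splits)
    have w1: "ce_w1 W" and w2: "ce_w2 K M W" using cw W unfolding ce_w_def by simp_all
    have W1: "sum_list (map fst W) = 48" using w1 unfolding ce_w1_def by simp
    have W2: "list_all (\<lambda>(c,\<pi>). \<pi> \<in> set perms4) W" using w1 unfolding ce_w1_def by simp
    have W3: "list_all (\<lambda>i. list_all (\<lambda>h. M!i!h = sum_list (map (\<lambda>(c,\<pi>). if sd_assign (fromkey K) \<pi> {..<4} i = h then c else 0) W)) [0,1,2,3]) [0,1,2,3]"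
      using w2 unfolding ce_w2_def .
    show ?thesis
    proof (rule exI[of _ "length W"], rule exI[of _ "\<lambda>l. real (fst (W!l)) / 48"], rule exI[of _ "\<lambda>l. SD 4 (snd (W!l)) R"], intro conjI allI impI)
      fix l assume l: "l < length W"
      show "0 \<le> real (fst (W!l)) / 48" by simp
      have "W ! l \<in> set W" using l by simp
      then have "snd (W!l) \<in> set perms4" using W2 by (auto simp: list_all_iff)
      then have "snd (W!l) \<in> permutations_of_set {0..<4}" using PS4 by simp
      then show "efficient_at 4 R (SD 4 (snd (W!l)) R)" by (rule SD_eff[OF p])
    next
      have "(\<Sum>l<length W. real (fst (W!l)) / 48) = sum_list (map (\<lambda>e. real (fst e) / 48) W)"
        by (rule sum_nth)
      then show "(\<Sum>l<length W. real (fst (W!l)) / 48) = 1" using sum_w[of W] W1 by simp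
    next
      fix i h :: nat assume i: "i < 4" and h: "h < 4"
      have "(\<Sum>l<length W. real (fst (W!l)) / 48 * SD 4 (snd (W!l)) R i h)
          = sum_list (map (\<lambda>e. real (fst e) / 48 * SD 4 (snd e) R i h) W)"
        by (rule sum_nth)
      also have "\<dots> = sum_list (map (\<lambda>e. real (fst e) / 48 * (if sd_assign R (snd e) {..<4} i = h then 1 else 0)) W)"
        by (simp add: SD_def)
      also have "\<dots> = real (sum_list (map (\<lambda>(c,\<pi>). if sd_assign R \<pi> {..<4} i = h then c else 0) W)) / 48"
        by (rule sum_w2)
      also have "\<dots> = real (M!i!h) / 48"
        using all4[OF all4[OF W3 i] h] RK by simp
      also have "\<dots> = ff R i h" unfolding ff_some[OF Some] by simp
      finally show "ff R i h = (\<Sum>l<length W. real (fst (W!l)) / 48 * SD 4 (snd (W!l)) R i h)" by simp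
    qed
  qed
qed

lemma dom4_of: "domain_gt 4 R \<Longrightarrow> dom4 (map R [0..<4])"
proof -
  assume "domain_gt 4 R"
  then obtain hs L where hs: "hs < 4" and L: "\<forall>i<4. filter (\<lambda>h. h \<noteq> hs) (R i) = L"
    unfolding domain_gt_def by blast
  have "\<forall>k\<in>set [0,1,2,3]. filter (\<lambda>h. h \<noteq> hs) (map R [0..<4] ! k) = filter (\<lambda>h. h \<noteq> hs) (map R [0..<4] ! 0)"
    using L by auto
  moreover have "hs \<in> set [0,1,2,3]" using cases4[OF hs] by auto
  ultimately show ?thesis unfolding dom4_def by blast
qed

lemma pref_perms4: "is_profile 4 R \<Longrightarrow> i < 4 \<Longrightarrow> R i \<in> set perms4"
  using PS4 by (auto simp: is_profile_def is_pref_def permutations_of_set_def)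

lemma sp: "strategyproof 4 ff"
  unfolding strategyproof_def
proof (intro allI impI)
  fix R R' and i h :: nat assume i: "i < 4" and d: "domain_gt 4 R" and d': "domain_gt 4 R'"
    and ag: "\<forall>j. j \<noteq> i \<longrightarrow> R j = R' j" and h: "h < 4"
  have p: "is_profile 4 R" using d by (simp add: domain_gt_def)
  have p': "is_profile 4 R'" using d' by (simp add: domain_gt_def)
  define K where "K = map R [0..<4]"
  define K' where "K' = map R' [0..<4]"
  have RK: "R = fromkey K" unfolding K_def using key_fromkey[OF p] by simp
  have RK': "R' = fromkey K'" unfolding K'_def using key_fromkey[OF p'] by simp
  have lK: "length K = 4" and lK': "length K' = 4" unfolding K_def K'_def by simp_all
  have K'eq: "K' = K[i := R' i]"
    by (rule nth_equalityI) (use ag i in \<open>auto simp: K_def K'_def nth_list_update\<close>)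
  have Keq: "K = K'[i := R i]"
    by (rule nth_equalityI) (use ag i in \<open>auto simp: K_def K'_def nth_list_update\<close>)
  have Ki: "K ! i = R i" using i unfolding K_def by simp
  have dK: "dom4 K" unfolding K_def by (rule dom4_of[OF d])
  have dK': "dom4 K'" unfolding K'_def by (rule dom4_of[OF d'])
  have pi: "R i \<in> set perms4" by (rule pref_perms4[OF p i])
  have pi': "R' i \<in> set perms4" by (rule pref_perms4[OF p' i])
  have key: "cuml (R i) (rown K' i) h \<le> cuml (R i) (rown K i) h"
  proof (cases "map_of tbl K")
    case (Some M)
    have c: "chk_entry (K, M)" by (rule entry_of[OF Some])
    have r: "ce_sp K" using ce[OF c] by simp
    have "list_all (chk_pair K i) perms4" by (rule all4[OF r[unfolded ce_sp_def] i])
    then have "chk_pair K i (R' i)" using pi' by (auto simp: list_all_iff)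
    then have "list_all (\<lambda>h. cuml (K!i) (rown K' i) h \<le> cuml (K!i) (rown K i) h \<and> cuml (R' i) (rown K i) h \<le> cuml (R' i) (rown K' i) h) [0,1,2,3]"
      unfolding chk_pair_def Let_def using K'eq[symmetric] dK' by simp
    from all4[OF this h] show ?thesis using Ki by simp
  next
    case None
    show ?thesis
    proof (cases "map_of tbl K'")
      case (Some M')
      have c: "chk_entry (K', M')" by (rule entry_of[OF Some])
      have r: "ce_sp K'" using ce[OF c] by simp
      have "list_all (chk_pair K' i) perms4" by (rule all4[OF r[unfolded ce_sp_def] i])
      then have "chk_pair K' i (R i)" using pi by (auto simp: list_all_iff)
      then have "list_all (\<lambda>h. cuml (K'!i) (rown K i) h \<le> cuml (K'!i) (rown K' i) h \<and> cuml (R i) (rown K' i) h \<le> cuml (R i) (rown K i) h) [0,1,2,3]"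
        unfolding chk_pair_def Let_def using Keq[symmetric] dK by simp
      from all4[OF this h] show ?thesis by simp
    next
      case None': None
      have "(\<Sum>h'\<in>{h'. h' < 4 \<and> prefers (R i) h' h}. RSD 4 R i h')
          \<ge> (\<Sum>h'\<in>{h'. h' < 4 \<and> prefers (R i) h' h}. RSD 4 R' i h')"
        by (rule RSD_sp[OF p p' ag i])
      then have "(\<Sum>h'\<in>{h'. h' < 4 \<and> prefers (R i) h' h}. ff (fromkey K) i h')
          \<ge> (\<Sum>h'\<in>{h'. h' < 4 \<and> prefers (R i) h' h}. ff (fromkey K') i h')"
        using ff_none[of R] ff_none[of R'] None None' RK RK' unfolding K_def K'_def by simp
      then show ?thesis unfolding cum_ff[OF lK] cum_ff[OF lK'] by simp
    qed
  qed
  show "(\<Sum>h'\<in>{h'. h' < 4 \<and> prefers (R i) h' h}. ff R i h')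
      \<ge> (\<Sum>h'\<in>{h'. h' < 4 \<and> prefers (R i) h' h}. ff R' i h')"
    unfolding RK RK' using key unfolding cum_ff[OF lK] cum_ff[OF lK'] by (simp add: RK[symmetric])
qed

lemma diff: "\<exists>R. domain_gt 4 R \<and> (\<exists>i<4. \<exists>h<4. ff R i h \<noteq> RSD 4 R i h)"
proof -
  define K0 where "K0 = [[0,1,2,3],[0,1,3,2],[0,2,1,3],[0,2,1,3::nat]]"
  have lK0: "length K0 = 4" unfolding K0_def by simp
  have "\<forall>i<4. is_pref 4 (fromkey K0 i)"
  proof (intro allI impI)
    fix i :: nat assume "i < 4"
    then show "is_pref 4 (fromkey K0 i)"
      using cases4[of i] by (auto simp: fromkey_def K0_def is_pref_def)
  qed
  moreover have "\<forall>j\<ge>4. fromkey K0 j = []" by (simp add: fromkey_def)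
  ultimately have prof: "is_profile 4 (fromkey K0)" unfolding is_profile_def by blast
  have "\<forall>i<4. filter (\<lambda>h. h \<noteq> 2) (fromkey K0 i) = [0,1,3]"
  proof (intro allI impI)
    fix i :: nat assume "i < 4"
    then show "filter (\<lambda>h. h \<noteq> 2) (fromkey K0 i) = [0,1,3]"
      using cases4[of i] by (auto simp: fromkey_def K0_def)
  qed
  then have "\<exists>hs<4. \<exists>L. \<forall>i<4. filter (\<lambda>h. h \<noteq> hs) (fromkey K0 i) = L"
    by (intro exI[of _ 2] conjI exI[of _ "[0,1,3]"]) simp_all
  then have dom: "domain_gt 4 (fromkey K0)" unfolding domain_gt_def using prof by blast
  have a: "ff (fromkey K0) 0 1 = real (rown K0 0 ! 1) / 48" by (rule ff_rown[OF lK0]) simp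
  have b: "rown K0 0 ! 1 = 16" by (simp add: K0_def CS)
  have c: "RSD 4 (fromkey K0) 0 1 = real (cnt (map (\<lambda>\<pi>. sd_assign (fromkey K0) \<pi> {..<4} 0) perms4) 1) / 24"
    by (rule RSD_comp)
  have e: "cnt (map (\<lambda>\<pi>. sd_assign (fromkey K0) \<pi> {..<4} 0) perms4) 1 = 10" by (simp add: K0_def CS)
  have "ff (fromkey K0) 0 1 \<noteq> RSD 4 (fromkey K0) 0 1" using a b c e by simp
  moreover have "(0::nat) < 4" "(1::nat) < 4" by simp_all
  ultimately show ?thesis using dom by blast
qed

theorem mainTheorem7:
  shows "\<exists>f. assignment_rule 4 f \<and> equal_treatment 4 f \<and> ex_post_efficient 4 f \<and>
           strategyproof 4 f \<and>
           (\<exists>R. domain_gt 4 R \<and> (\<exists>i<4. \<exists>h<4. f R i h \<noteq> RSD 4 R i h))"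
  using ar ete ep sp diff by blast

end
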